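(* Assume there is a measure $\lambda$ on $\mathcal{X}$ with $T(\cdot\mid x)\ll\lambda$ for every $x$, with densities $t(\cdot\mid x)=dT(\cdot\mid x)/d\lambda$ forming a uniformly bounded, equicontinuous family (for every $x'\in\mathcal{X}$ and $\epsilon>0$ there is $\delta>0$ such that $d(y,x')<\delta$ implies $|t(y\mid x)-t(x'\mid x)|<\epsilon$ for all $x$). Let $\mu,\nu$ be priors and let $f_{n-}^\mu$, $f_{n-}^\nu$ denote the densities of $\pi_{n-}^\mu$, $\pi_{n-}^\nu$ with respect to $\lambda$. Fix any sequence of measurements $y_{[0,\infty)}$. Then the collections $\mathscr{F}^\mu=\{f_{n-}^\mu: n\in\mathbb{N}\}$ and $\mathscr{F}^\nu=\{f_{n-}^\nu:n\in\mathbb{N}\}$ are uniformly bounded, equicontinuous families.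
   Context: Setting: $\mathcal{X},\mathcal{Y},\mathcal{Z}$ are Polish spaces, $d$ the metric on $\mathcal{X}$. $T$ is a transition kernel on $\mathcal{X}$; $\{Z_n\}$ i.i.d. with law $Q$ independent of the states; $h:\mathcal{X}\times\mathcal{Z}\to\mathcal{Y}$ measurable; $X_0\sim\mu$, $Y_n=h(X_n,Z_n)$; $P^\mu$ the joint law. Predictor $\pi_{n-}^{\mu}=P^{\mu}(X_n\in\cdot\mid Y_0,\dots,Y_{n-1})$, evaluated along the fixed measurement sequence; the predictors are absolutely continuous with respect to $\lambda$ for $n\ge1$. *)

theory Defs
  imports "HOL-Probability.Probability"
begin

definition unif_bdd_equicont :: "('i \<Rightarrow> 'x::metric_space \<Rightarrow> real) \<Rightarrow> 'i set \<Rightarrow> bool" where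
  "unif_bdd_equicont g I \<longleftrightarrow>
     (\<exists>B. \<forall>i\<in>I. \<forall>y. \<bar>g i y\<bar> \<le> B) \<and>
     (\<forall>x'. \<forall>\<epsilon>>0. \<exists>\<delta>>0. \<forall>y. dist y x' < \<delta> \<longrightarrow> (\<forall>i\<in>I. \<bar>g i y - g i x'\<bar> < \<epsilon>))"

text \<open>Predictor sequence along a fixed measurement sequence: pi 0 = mu (prior) and
pi (n+1) = integral of T(.|x) against the filter at time n, which is a probability
measure on X (the posterior P(X_n in . | y_0..y_n)).\<close>
definition predictor_seq :: "('x::polish_space \<Rightarrow> 'x measure) \<Rightarrow> 'x measure \<Rightarrow> (nat \<Rightarrow> 'x measure) \<Rightarrow> bool" where
  "predictor_seq T \<mu> \<pi> \<longleftrightarrow>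
     \<pi> 0 = \<mu> \<and>
     (\<forall>n. \<exists>F. F \<in> space (prob_algebra borel) \<and> \<pi> (Suc n) = F \<bind> T)"

end

theory Submission
  imports Defs
begin

lemma ennreal_minus_le_aux: "a \<le> b + c \<Longrightarrow> c < top \<Longrightarrow> a - c \<le> (b::ennreal)"
  by (cases a; cases b; cases c) (auto simp flip: ennreal_minus ennreal_plus simp: ennreal_minus_if top_unique)

lemma nn_integral_shift_le:
  fixes g :: "'a \<Rightarrow> ennreal" and c :: ennreal
  assumes M: "prob_space M" and ct: "c < top"
  shows "(\<integral>\<^sup>+x. g x + c \<partial>M) \<le> (\<integral>\<^sup>+x. g x \<partial>M) + c"
  unfolding nn_integral_def[of M "\<lambda>x. g x + c"]
proof (rule SUP_least)
  fix s assume "s \<in> {s. simple_function M s \<and> s \<le> (\<lambda>x. g x + c)}"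
  then have s: "simple_function M s" and sle: "\<And>x. s x \<le> g x + c" by (auto simp: le_fun_def)
  define s' where "s' = (\<lambda>x. s x - c)"
  have s': "simple_function M s'" unfolding s'_def using s by (rule simple_function_compose1)
  have "integral\<^sup>S M s = integral\<^sup>N M s" using s by (simp add: nn_integral_eq_simple_integral)
  also have "\<dots> \<le> (\<integral>\<^sup>+x. s' x + c \<partial>M)"
    by (rule nn_integral_mono) (auto simp: s'_def diff_add_self_ennreal not_le)
  also have "\<dots> = integral\<^sup>N M s' + (\<integral>\<^sup>+x. c \<partial>M)"
    by (rule nn_integral_add) (use s' borel_measurable_simple_function in auto)
  also have "(\<integral>\<^sup>+x. c \<partial>M) = c" using M by (simp add: prob_space.emeasure_space_1)
  also have "integral\<^sup>N M s' \<le> integral\<^sup>N M g"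
    by (rule nn_integral_mono) (use sle ct in \<open>auto simp: s'_def intro: ennreal_minus_le_aux\<close>)
  finally show "integral\<^sup>S M s \<le> integral\<^sup>N M g + c" by (simp add: add_right_mono)
qed

lemma ennreal_div_mult_cancel: "L \<noteq> 0 \<Longrightarrow> L \<noteq> top \<Longrightarrow> (a / L) * L = (a::ennreal)"
  by (metis ennreal_times_divide ennreal_divide_times mult_divide_eq_ennreal)

lemma nn_integral_upper_aux:
  fixes a \<phi> :: "'a \<Rightarrow> ennreal" and c L :: ennreal
  assumes M: "prob_space M" and \<phi>: "\<phi> \<in> borel_measurable M"
    and c: "0 < c" "c < top"
    and le: "\<And>x. \<phi> x \<le> (a x + c) * L"
  shows "(\<integral>\<^sup>+x. \<phi> x \<partial>M) \<le> ((\<integral>\<^sup>+x. a x \<partial>M) + c) * L"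
proof -
  consider "L = 0" | "L = top" | "L \<noteq> 0" "L \<noteq> top" by blast
  then show ?thesis
  proof cases
    case 1
    then have "\<And>x. \<phi> x = 0" using le by (metis le_zero_eq mult_zero_right)
    then show ?thesis by simp
  next
    case 2
    have "(\<integral>\<^sup>+x. a x \<partial>M) + c \<noteq> 0" using c by auto
    then show ?thesis using 2 by (auto simp: ennreal_mult_top)
  next
    case 3
    define h where "h x = \<phi> x / L" for x
    have hm: "h \<in> borel_measurable M" unfolding h_def using \<phi> by measurable
    have hphi: "h x * L = \<phi> x" for x unfolding h_def using 3 by (rule ennreal_div_mult_cancel)
    have hle: "h x \<le> a x + c" for x
    proof -
      have "h x \<le> ((a x + c) * L) / L" unfolding h_def by (rule divide_right_mono_ennreal[OF le])
      also have "\<dots> = a x + c" using 3 by (simp add: mult_divide_eq_ennreal)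
      finally show ?thesis .
    qed
    have "(\<integral>\<^sup>+x. \<phi> x \<partial>M) = (\<integral>\<^sup>+x. h x * L \<partial>M)" by (simp add: hphi)
    also have "\<dots> = (\<integral>\<^sup>+x. h x \<partial>M) * L" by (rule nn_integral_multc[OF hm])
    also have "(\<integral>\<^sup>+x. h x \<partial>M) \<le> (\<integral>\<^sup>+x. a x + c \<partial>M)" by (rule nn_integral_mono) (rule hle)
    also have "\<dots> \<le> (\<integral>\<^sup>+x. a x \<partial>M) + c" by (rule nn_integral_shift_le[OF M c(2)])
    finally show ?thesis by (simp add: mult_right_mono)
  qed
qed

lemma nn_integral_lower_aux:
  fixes a \<phi> :: "'a \<Rightarrow> ennreal" and c L :: ennreal
  assumes M: "prob_space M" and \<phi>: "\<phi> \<in> borel_measurable M"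
    and c: "0 < c" "c < top"
    and le: "\<And>x. a x * L \<le> \<phi> x + c * L"
  shows "(\<integral>\<^sup>+x. a x \<partial>M) * L \<le> (\<integral>\<^sup>+x. \<phi> x \<partial>M) + c * L"
proof -
  consider "L = 0" | "L = top" | "L \<noteq> 0" "L \<noteq> top" by blast
  then show ?thesis
  proof cases
    case 1
    then show ?thesis by simp
  next
    case 2
    then show ?thesis using c by (auto simp: ennreal_mult_top)
  next
    case 3
    define h where "h x = \<phi> x / L" for x
    have hm: "h \<in> borel_measurable M" unfolding h_def using \<phi> by measurable
    have hphi: "h x * L = \<phi> x" for x unfolding h_def using 3 by (rule ennreal_div_mult_cancel)
    have hle: "a x \<le> h x + c" for x
    proof -
      have "a x = (a x * L) / L" using 3 by (simp add: mult_divide_eq_ennreal)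
      also have "\<dots> \<le> (\<phi> x + c * L) / L" by (rule divide_right_mono_ennreal[OF le])
      also have "\<dots> = h x + c" unfolding h_def using 3
        by (simp add: add_divide_distrib_ennreal mult_divide_eq_ennreal)
      finally show ?thesis .
    qed
    have "(\<integral>\<^sup>+x. a x \<partial>M) \<le> (\<integral>\<^sup>+x. h x + c \<partial>M)" by (rule nn_integral_mono) (rule hle)
    also have "\<dots> = (\<integral>\<^sup>+x. h x \<partial>M) + (\<integral>\<^sup>+x. c \<partial>M)" by (rule nn_integral_add) (use hm in auto)
    also have "(\<integral>\<^sup>+x. c \<partial>M) = c" using M by (simp add: prob_space.emeasure_space_1)
    finally have "(\<integral>\<^sup>+x. a x \<partial>M) * L \<le> ((\<integral>\<^sup>+x. h x \<partial>M) + c) * L" by (simp add: mult_right_mono)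
    also have "\<dots> = (\<integral>\<^sup>+x. h x * L \<partial>M) + c * L"
      by (simp add: distrib_right nn_integral_multc[OF hm])
    also have "\<dots> = (\<integral>\<^sup>+x. \<phi> x \<partial>M) + c * L" by (simp add: hphi)
    finally show ?thesis .
  qed
qed

context
  fixes T :: "'x::polish_space \<Rightarrow> 'x measure" and lam :: "'x measure"
    and t :: "'x \<Rightarrow> 'x \<Rightarrow> real" and F :: "'x measure" and B :: real
  assumes lam: "sets lam = sets borel"
    and Tm: "T \<in> borel \<rightarrow>\<^sub>M prob_algebra borel"
    and tm: "\<And>x. t x \<in> borel_measurable borel"
    and tpos: "\<And>x y. t x y \<ge> 0"
    and Td: "\<And>x. T x = density lam (\<lambda>y. ennreal (t x y))"
    and Bd: "\<And>x y. t x y \<le> B"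
    and eqc: "\<And>x' e. e > 0 \<Longrightarrow> \<exists>d>0. \<forall>y. dist y x' < d \<longrightarrow> (\<forall>x. \<bar>t x y - t x x'\<bar> < e)"
    and F: "F \<in> space (prob_algebra borel)"
begin

lemma F_sets: "sets F = sets borel" and F_prob: "prob_space F"
  using F by (auto simp: space_prob_algebra)

lemma F_space: "space F = UNIV"
  using sets_eq_imp_space_eq[OF F_sets] by simp

definition "gg y = (\<integral>\<^sup>+x. ennreal (t x y) \<partial>F)"
definition "ff y = enn2real (gg y)"

lemma gg_le: "gg y \<le> ennreal B"
proof -
  have "gg y \<le> (\<integral>\<^sup>+x. ennreal B \<partial>F)" unfolding gg_def
    by (rule nn_integral_mono) (simp add: Bd ennreal_leI)
  also have "\<dots> = ennreal B" using F_prob by (simp add: prob_space.emeasure_space_1)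
  finally show ?thesis .
qed

lemma gg_fin: "gg y < top"
  using gg_le[of y] by (simp add: le_less_trans)

lemma ennreal_ff: "ennreal (ff y) = gg y"
  unfolding ff_def using gg_fin[of y] by simp

lemma ff_nonneg: "ff y \<ge> 0" unfolding ff_def by simp

lemma ff_le: "ff y \<le> B"
proof -
  have "0 \<le> B" using tpos[of undefined y] Bd[of undefined y] by linarith
  then show ?thesis using gg_le[of y] unfolding ff_def
    by (metis enn2real_ennreal enn2real_mono ennreal_neq_top top.not_eq_extremum)
qed

lemma gg_close:
  assumes "\<And>x. \<bar>t x y - t x y'\<bar> \<le> e"
  shows "gg y \<le> gg y' + ennreal e"
proof -
  have "gg y \<le> (\<integral>\<^sup>+x. ennreal (t x y') + ennreal e \<partial>F)" unfolding gg_def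
  proof (rule nn_integral_mono)
    fix x
    have "t x y \<le> t x y' + e" using assms[of x] by linarith
    moreover have "0 \<le> e" using assms[of undefined] by linarith
    ultimately show "ennreal (t x y) \<le> ennreal (t x y') + ennreal e"
      by (simp add: tpos flip: ennreal_plus)
  qed
  also have "\<dots> \<le> gg y' + ennreal e" unfolding gg_def
    by (rule nn_integral_shift_le[OF F_prob]) simp
  finally show ?thesis .
qed

lemma ff_close:
  assumes "\<And>x. \<bar>t x y - t x y'\<bar> \<le> e"
  shows "\<bar>ff y - ff y'\<bar> \<le> e"
proof -
  have e: "0 \<le> e" using assms[of undefined] by linarith
  have "\<And>x. \<bar>t x y' - t x y\<bar> \<le> e" using assms by (simp add: abs_minus_commute)
  from gg_close[OF assms] gg_close[OF this]
  have p1: "ennreal (ff y' + e) = gg y' + ennreal e" "ennreal (ff y + e) = gg y + ennreal e"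
    by (simp_all only: ennreal_plus e ff_nonneg ennreal_ff)
  have "ennreal (ff y) \<le> ennreal (ff y' + e)" "ennreal (ff y') \<le> ennreal (ff y + e)"
    unfolding p1 ennreal_ff by fact+
  then have "ff y \<le> ff y' + e" "ff y' \<le> ff y + e"
    using e ff_nonneg by (metis add_nonneg_nonneg ennreal_le_iff)+
  then show ?thesis by linarith
qed

lemma ff_cont: "continuous_on UNIV ff"
  unfolding continuous_on_iff
proof (intro ballI allI impI)
  fix y' :: 'x and e :: real assume "0 < e"
  then obtain d where d: "d > 0" "\<And>y. dist y y' < d \<Longrightarrow> (\<forall>x. \<bar>t x y - t x y'\<bar> < e/2)"
    using eqc[of "e/2" y'] by auto
  show "\<exists>d>0. \<forall>y\<in>UNIV. dist y y' < d \<longrightarrow> dist (ff y) (ff y') < e"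
  proof (intro exI[of _ d] conjI ballI impI)
    fix y assume "dist y y' < d"
    then have "\<bar>ff y - ff y'\<bar> \<le> e/2" using d by (intro ff_close) (auto intro: less_imp_le)
    then show "dist (ff y) (ff y') < e" using \<open>0 < e\<close> by (simp add: dist_real_def)
  qed (use d in auto)
qed

lemma ff_meas: "ff \<in> borel_measurable borel"
  by (rule borel_measurable_continuous_onI[OF ff_cont])

lemma gg_meas: "gg \<in> borel_measurable lam"
proof -
  have "(\<lambda>y. ennreal (ff y)) \<in> borel_measurable borel" using ff_meas by measurable
  then show ?thesis unfolding ennreal_ff using measurable_cong_sets[OF lam refl] by blast
qed

lemma tx_meas: "(\<lambda>y. ennreal (t x y)) \<in> borel_measurable lam"
proof -
  have "(\<lambda>y. ennreal (t x y)) \<in> borel_measurable borel" using tm[of x] by measurable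
  then show ?thesis using measurable_cong_sets[OF lam refl] by blast
qed

lemma T_space: "T x \<in> space (prob_algebra borel)"
  using measurable_space[OF Tm] by simp

lemma sets_T: "sets (T x) = sets borel" and prob_T: "prob_space (T x)"
  using T_space[of x] by (auto simp: space_prob_algebra)

lemma sets_nu: "sets (F \<bind> T) = sets borel"
  using F_space by (intro sets_bind) (auto simp: sets_T)

lemma nu_eq: "A \<in> sets borel \<Longrightarrow> emeasure (F \<bind> T) A = (\<integral>\<^sup>+x. emeasure (T x) A \<partial>F)"
  by (rule emeasure_bind_prob_algebra[OF F Tm])

lemma TA_eq: "A \<in> sets borel \<Longrightarrow> emeasure (T x) A = (\<integral>\<^sup>+y. ennreal (t x y) * indicator A y \<partial>lam)"
  unfolding Td using lam by (intro emeasure_density[OF tx_meas]) simp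

lemma TA_meas: "A \<in> sets borel \<Longrightarrow> (\<lambda>x. emeasure (T x) A) \<in> borel_measurable F"
proof -
  assume A: "A \<in> sets borel"
  have "(\<lambda>x. emeasure (T x) A) \<in> borel_measurable borel"
    using measurable_emeasure_subprob_algebra[OF A] measurable_prob_algebraD[OF Tm]
    by (rule measurable_compose[rotated])
  then show ?thesis using measurable_cong_sets[OF F_sets refl] by blast
qed

lemma rho_eq: "A \<in> sets borel \<Longrightarrow> emeasure (density lam gg) A = (\<integral>\<^sup>+y. gg y * indicator A y \<partial>lam)"
  using lam by (intro emeasure_density[OF gg_meas]) simp

lemma local_est:
  assumes e: "e > 0"
  shows "\<exists>d>0. \<forall>A \<in> sets borel. A \<subseteq> ball y0 d \<longrightarrow>
     emeasure (F \<bind> T) A \<le> emeasure (density lam gg) A + ennreal e * emeasure lam A \<and>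
     emeasure (density lam gg) A \<le> emeasure (F \<bind> T) A + ennreal e * emeasure lam A"
proof -
  define e2 where "e2 = e / 2"
  have e2: "e2 > 0" using e by (simp add: e2_def)
  obtain d where d: "d > 0" "\<And>y. dist y y0 < d \<Longrightarrow> (\<forall>x. \<bar>t x y - t x y0\<bar> < e2)"
    using eqc[OF e2, of y0] by auto
  have ee: "ennreal e2 * L + ennreal e2 * L = ennreal e * L" for L
    using e2 by (simp add: e2_def flip: distrib_right ennreal_plus)
  show ?thesis
  proof (intro exI[of _ d] conjI ballI impI)
    fix A :: "'x set" assume A: "A \<in> sets borel" "A \<subseteq> ball y0 d"
    define L where "L = emeasure lam A"
    have AL: "A \<in> sets lam" using A lam by simp
    have close: "\<bar>t x y - t x y0\<bar> \<le> e2" if "y \<in> A" for x y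
    proof -
      have "dist y y0 < d" using A(2) that by (auto simp: dist_commute)
      then show ?thesis using d(2)[of y] by (auto intro: less_imp_le)
    qed
    have a: "emeasure (T x) A \<le> (ennreal (t x y0) + ennreal e2) * L" for x
    proof -
      have "emeasure (T x) A \<le> (\<integral>\<^sup>+y. (ennreal (t x y0) + ennreal e2) * indicator A y \<partial>lam)"
        unfolding TA_eq[OF A(1)]
      proof (rule nn_integral_mono)
        fix y show "ennreal (t x y) * indicator A y \<le> (ennreal (t x y0) + ennreal e2) * indicator A y"
        proof (cases "y \<in> A")
          case True
          then have "t x y \<le> t x y0 + e2" using close[of y x] by linarith
          then show ?thesis using True e2 tpos[of x y0] by (simp flip: ennreal_plus)
        qed simp
      qed
      also have "\<dots> = (ennreal (t x y0) + ennreal e2) * L"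
        unfolding L_def by (rule nn_integral_cmult_indicator[OF AL])
      finally show ?thesis .
    qed
    have b: "ennreal (t x y0) * L \<le> emeasure (T x) A + ennreal e2 * L" for x
    proof -
      have "ennreal (t x y0) * L = (\<integral>\<^sup>+y. ennreal (t x y0) * indicator A y \<partial>lam)"
        unfolding L_def by (rule nn_integral_cmult_indicator[OF AL, symmetric])
      also have "\<dots> \<le> (\<integral>\<^sup>+y. ennreal (t x y) * indicator A y + ennreal e2 * indicator A y \<partial>lam)"
      proof (rule nn_integral_mono)
        fix y show "ennreal (t x y0) * indicator A y \<le> ennreal (t x y) * indicator A y + ennreal e2 * indicator A y"
        proof (cases "y \<in> A")
          case True
          then have "t x y0 \<le> t x y + e2" using close[of y x] by linarith
          then show ?thesis using True e2 tpos[of x y] by (simp flip: ennreal_plus)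
        qed simp
      qed
      also have "\<dots> = emeasure (T x) A + ennreal e2 * L"
        unfolding TA_eq[OF A(1)] L_def
        using AL tx_meas[of x] by (subst nn_integral_add) (auto simp: nn_integral_cmult_indicator)
      finally show ?thesis .
    qed
    have c: "emeasure (density lam gg) A \<le> (gg y0 + ennreal e2) * L"
    proof -
      have "emeasure (density lam gg) A \<le> (\<integral>\<^sup>+y. (gg y0 + ennreal e2) * indicator A y \<partial>lam)"
        unfolding rho_eq[OF A(1)]
      proof (rule nn_integral_mono)
        fix y show "gg y * indicator A y \<le> (gg y0 + ennreal e2) * indicator A y"
        proof (cases "y \<in> A")
          case True
          then show ?thesis using gg_close[of y y0 e2] close[of y] by simp
        qed simp
      qed
      also have "\<dots> = (gg y0 + ennreal e2) * L"
        unfolding L_def by (rule nn_integral_cmult_indicator[OF AL])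
      finally show ?thesis .
    qed
    have dd: "gg y0 * L \<le> emeasure (density lam gg) A + ennreal e2 * L"
    proof -
      have "gg y0 * L = (\<integral>\<^sup>+y. gg y0 * indicator A y \<partial>lam)"
        unfolding L_def by (rule nn_integral_cmult_indicator[OF AL, symmetric])
      also have "\<dots> \<le> (\<integral>\<^sup>+y. gg y * indicator A y + ennreal e2 * indicator A y \<partial>lam)"
      proof (rule nn_integral_mono)
        fix y show "gg y0 * indicator A y \<le> gg y * indicator A y + ennreal e2 * indicator A y"
        proof (cases "y \<in> A")
          case True
          have "\<bar>t x y0 - t x y\<bar> \<le> e2" for x using close[OF True, of x] by (simp add: abs_minus_commute)
          then show ?thesis using True gg_close[of y0 y e2] by simp
        qed simp
      qed
      also have "\<dots> = emeasure (density lam gg) A + ennreal e2 * L"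
        unfolding rho_eq[OF A(1)] L_def
        using AL gg_meas by (subst nn_integral_add) (auto simp: nn_integral_cmult_indicator)
      finally show ?thesis .
    qed
    have e': "emeasure (F \<bind> T) A \<le> (gg y0 + ennreal e2) * L"
      unfolding nu_eq[OF A(1)] gg_def
      by (rule nn_integral_upper_aux[OF F_prob TA_meas[OF A(1)]]) (use e2 a in auto)
    have f': "gg y0 * L \<le> emeasure (F \<bind> T) A + ennreal e2 * L"
      unfolding nu_eq[OF A(1)] gg_def
      by (rule nn_integral_lower_aux[OF F_prob TA_meas[OF A(1)]]) (use e2 b in auto)
    have "emeasure (F \<bind> T) A \<le> gg y0 * L + ennreal e2 * L" using e' by (simp add: distrib_right)
    also have "\<dots> \<le> emeasure (density lam gg) A + ennreal e2 * L + ennreal e2 * L"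
      using dd by (simp add: add_right_mono)
    finally show "emeasure (F \<bind> T) A \<le> emeasure (density lam gg) A + ennreal e * emeasure lam A"
      by (simp add: ee add.assoc L_def)
    have "emeasure (density lam gg) A \<le> gg y0 * L + ennreal e2 * L" using c by (simp add: distrib_right)
    also have "\<dots> \<le> emeasure (F \<bind> T) A + ennreal e2 * L + ennreal e2 * L"
      using f' by (simp add: add_right_mono)
    finally show "emeasure (density lam gg) A \<le> emeasure (F \<bind> T) A + ennreal e * emeasure lam A"
      by (simp add: ee add.assoc L_def)
  qed (use d in auto)
qed

lemma sets_rho: "sets (density lam gg) = sets borel" using lam by simp

lemma cover_est:
  assumes e: "e > 0" and Bs: "Bs \<in> sets borel"
  shows "emeasure (F \<bind> T) Bs \<le> emeasure (density lam gg) Bs + ennreal e * emeasure lam Bs"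
    and "emeasure (density lam gg) Bs \<le> emeasure (F \<bind> T) Bs + ennreal e * emeasure lam Bs"
proof -
  define nu where "nu = F \<bind> T"
  define rho where "rho = density lam gg"
  obtain BB :: "'x set set" where BB: "countable BB" "topological_basis BB"
    using ex_countable_basis by blast
  define good where "good U \<longleftrightarrow> (\<forall>A\<in>sets borel. A \<subseteq> U \<longrightarrow>
     emeasure nu A \<le> emeasure rho A + ennreal e * emeasure lam A \<and>
     emeasure rho A \<le> emeasure nu A + ennreal e * emeasure lam A)" for U
  have BBne: "BB \<noteq> {}"
    using topological_basisE[OF BB(2) open_UNIV, of undefined] by blast
  define U where "U i = from_nat_into BB i" for i
  define G where "G i = (if good (U i) then U i else {})" for i
  have UB: "U i \<in> BB" for i unfolding U_def using from_nat_into[OF BBne] .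
  have Gs: "G i \<in> sets borel" for i
    unfolding G_def using topological_basis_open[OF BB(2) UB[of i]] by auto
  have cov: "\<exists>i. x \<in> G i" for x
  proof -
    obtain d where d: "d > 0" "\<forall>A \<in> sets borel. A \<subseteq> ball x d \<longrightarrow>
     emeasure nu A \<le> emeasure rho A + ennreal e * emeasure lam A \<and>
     emeasure rho A \<le> emeasure nu A + ennreal e * emeasure lam A"
      using local_est[OF e, of x] unfolding nu_def rho_def by blast
    obtain U' where U': "U' \<in> BB" "x \<in> U'" "U' \<subseteq> ball x d"
      using topological_basisE[OF BB(2) open_ball, of x x d] d(1) by auto
    have "good U'" unfolding good_def using d(2) U'(3) by blast
    obtain i where "U i = U'" using from_nat_into_surj[OF BB(1) U'(1)] U_def by blast
    then show ?thesis using U' \<open>good U'\<close> by (auto simp: G_def)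
  qed
  define D where "D = disjointed G"
  have Ds: "range D \<subseteq> sets borel" unfolding D_def
    by (rule sets.range_disjointed_sets) (use Gs in auto)
  have Dd: "disjoint_family D" unfolding D_def by (rule disjoint_family_disjointed)
  have DU: "(\<Union>i. D i) = UNIV" unfolding D_def UN_disjointed_eq using cov by auto
  have split: "emeasure m Bs = (\<Sum>i. emeasure m (Bs \<inter> D i))" if "sets m = sets borel" for m
  proof -
    have "(\<Sum>i. emeasure m (Bs \<inter> D i)) = emeasure m (\<Union>i. Bs \<inter> D i)"
      by (rule suminf_emeasure) (use Ds Bs that in auto, use Dd in \<open>unfold disjoint_family_on_def, blast\<close>)
    also have "(\<Union>i. Bs \<inter> D i) = Bs" using DU by auto
    finally show ?thesis ..
  qed
  have piece: "emeasure nu (Bs \<inter> D i) \<le> emeasure rho (Bs \<inter> D i) + ennreal e * emeasure lam (Bs \<inter> D i) \<and>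
     emeasure rho (Bs \<inter> D i) \<le> emeasure nu (Bs \<inter> D i) + ennreal e * emeasure lam (Bs \<inter> D i)" for i
  proof (cases "good (U i)")
    case True
    have "Bs \<inter> D i \<subseteq> U i" using disjointed_subset[of G i] True by (auto simp: D_def G_def)
    moreover have "Bs \<inter> D i \<in> sets borel" using Ds Bs by auto
    ultimately show ?thesis using True unfolding good_def by blast
  next
    case False
    then have "D i = {}" using disjointed_subset[of G i] by (auto simp: D_def G_def)
    then show ?thesis by simp
  qed
  have snu: "sets nu = sets borel" unfolding nu_def by (rule sets_nu)
  have srho: "sets rho = sets borel" unfolding rho_def by (rule sets_rho)
  have "emeasure nu Bs = (\<Sum>i. emeasure nu (Bs \<inter> D i))" by (rule split[OF snu])
  also have "\<dots> \<le> (\<Sum>i. emeasure rho (Bs \<inter> D i) + ennreal e * emeasure lam (Bs \<inter> D i))"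
    by (rule suminf_le) (use piece in auto)
  also have "\<dots> = emeasure rho Bs + ennreal e * emeasure lam Bs"
    by (simp add: split[OF srho] split[OF lam] flip: suminf_add)
  finally show "emeasure (F \<bind> T) Bs \<le> emeasure (density lam gg) Bs + ennreal e * emeasure lam Bs"
    unfolding nu_def rho_def .
  have "emeasure rho Bs = (\<Sum>i. emeasure rho (Bs \<inter> D i))" by (rule split[OF srho])
  also have "\<dots> \<le> (\<Sum>i. emeasure nu (Bs \<inter> D i) + ennreal e * emeasure lam (Bs \<inter> D i))"
    by (rule suminf_le) (use piece in auto)
  also have "\<dots> = emeasure nu Bs + ennreal e * emeasure lam Bs"
    by (simp add: split[OF snu] split[OF lam] flip: suminf_add)
  finally show "emeasure (density lam gg) Bs \<le> emeasure (F \<bind> T) Bs + ennreal e * emeasure lam Bs"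
    unfolding nu_def rho_def .
qed

lemma fin_eq:
  assumes Bs: "Bs \<in> sets borel" and fin: "emeasure lam Bs < top"
  shows "emeasure (F \<bind> T) Bs = emeasure (density lam gg) Bs"
proof -
  define L where "L = enn2real (emeasure lam Bs)"
  have L: "emeasure lam Bs = ennreal L" "L \<ge> 0" using fin by (auto simp: L_def)
  have key: "ennreal (e / (L + 1)) * emeasure lam Bs \<le> ennreal e" if "e > 0" for e
  proof -
    have "ennreal (e / (L + 1)) * emeasure lam Bs = ennreal (e / (L + 1) * L)"
      using L that by (simp add: ennreal_mult[symmetric])
    also have "e / (L + 1) * L \<le> e" using L that by (simp add: field_simps)
    finally show ?thesis by (simp add: ennreal_leI)
  qed
  have pos: "e / (L + 1) > 0" if "e > 0" for e using L that by simp
  show ?thesis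
  proof (rule antisym)
    show "emeasure (F \<bind> T) Bs \<le> emeasure (density lam gg) Bs"
    proof (rule ennreal_le_epsilon)
      fix e :: real assume "0 < e"
      show "emeasure (F \<bind> T) Bs \<le> emeasure (density lam gg) Bs + ennreal e"
        using cover_est(1)[OF pos[OF \<open>0 < e\<close>] Bs] key[OF \<open>0 < e\<close>]
        by (meson add_left_mono order.trans)
    qed
    show "emeasure (density lam gg) Bs \<le> emeasure (F \<bind> T) Bs"
    proof (rule ennreal_le_epsilon)
      fix e :: real assume "0 < e"
      show "emeasure (density lam gg) Bs \<le> emeasure (F \<bind> T) Bs + ennreal e"
        using cover_est(2)[OF pos[OF \<open>0 < e\<close>] Bs] key[OF \<open>0 < e\<close>]
        by (meson add_left_mono order.trans)
    qed
  qed
qed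

lemma bind_eq_density: "F \<bind> T = density lam gg"
proof -
  define nu where "nu = F \<bind> T"
  define rho where "rho = density lam gg"
  have snu: "sets nu = sets borel" unfolding nu_def by (rule sets_nu)
  have srho: "sets rho = sets borel" unfolding rho_def by (rule sets_rho)
  obtain BB :: "'x set set" where BB: "countable BB" "topological_basis BB"
    using ex_countable_basis by blast
  have BBne: "BB \<noteq> {}"
    using topological_basisE[OF BB(2) open_UNIV, of undefined] by blast
  define U where "U i = from_nat_into BB i" for i
  define H where "H i = (if emeasure lam (U i) < top then U i else {})" for i
  have UB: "U i \<in> BB" for i unfolding U_def using from_nat_into[OF BBne] .
  have Hs: "H i \<in> sets borel" for i
    unfolding H_def using topological_basis_open[OF BB(2) UB[of i]] by auto
  have Hfin: "emeasure lam (H i) < top" for i unfolding H_def by auto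
  define W where "W = (\<Union>i. H i)"
  have Ws: "W \<in> sets borel" unfolding W_def using Hs by auto
  have zero: "t x y = 0" if "y \<notin> W" for x y
  proof (rule ccontr)
    assume "t x y \<noteq> 0"
    then have c: "t x y / 2 > 0" using tpos[of x y] by simp
    obtain d where d: "d > 0" "\<And>z. dist z y < d \<Longrightarrow> (\<forall>x2. \<bar>t x2 z - t x2 y\<bar> < t x y / 2)"
      using eqc[OF c, of y] by auto
    obtain U' where U': "U' \<in> BB" "y \<in> U'" "U' \<subseteq> ball y d"
      using topological_basisE[OF BB(2) open_ball, of y y d] d(1) by auto
    have U's: "U' \<in> sets lam" using topological_basis_open[OF BB(2) U'(1)] lam by auto
    have "ennreal (t x y / 2) * emeasure lam U' = (\<integral>\<^sup>+z. ennreal (t x y / 2) * indicator U' z \<partial>lam)"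
      by (rule nn_integral_cmult_indicator[OF U's, symmetric])
    also have "\<dots> \<le> (\<integral>\<^sup>+z. ennreal (t x z) * indicator U' z \<partial>lam)"
    proof (rule nn_integral_mono)
      fix z show "ennreal (t x y / 2) * indicator U' z \<le> ennreal (t x z) * indicator U' z"
      proof (cases "z \<in> U'")
        case True
        then have "dist z y < d" using U'(3) by (auto simp: dist_commute)
        then have "\<bar>t x z - t x y\<bar> < t x y / 2" using d(2)[of z] by blast
        then have "t x y / 2 \<le> t x z" by linarith
        then show ?thesis using True by (simp add: ennreal_leI)
      qed simp
    qed
    also have "\<dots> = emeasure (T x) U'" using U's lam by (simp add: TA_eq)
    also have "\<dots> \<le> 1" using prob_T[of x] by (simp add: prob_space.emeasure_le_1)
    finally have "ennreal (t x y / 2) * emeasure lam U' \<le> 1" .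
    then have "emeasure lam U' < top" using c
      by (metis ennreal_eq_0_iff ennreal_mult_eq_top_iff ennreal_one_less_top linorder_not_le
          not_less_iff_gr_or_eq top.not_eq_extremum order.strict_trans1)
    moreover obtain i where "U i = U'" using from_nat_into_surj[OF BB(1) U'(1)] U_def by blast
    ultimately have "H i = U'" by (simp add: H_def)
    then show False using that U'(2) by (auto simp: W_def)
  qed
  have out: "emeasure nu (A - W) = 0 \<and> emeasure rho (A - W) = 0" if A: "A \<in> sets borel" for A
  proof
    have AW: "A - W \<in> sets borel" using A Ws by auto
    have "emeasure (T x) (A - W) = 0" for x
      unfolding TA_eq[OF AW] by (rule nn_integral_zero') (auto simp: zero indicator_def)
    then show "emeasure nu (A - W) = 0" unfolding nu_def nu_eq[OF AW] by simp
    have "gg y = 0" if "y \<notin> W" for y unfolding gg_def using zero[OF that] by simp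
    then show "emeasure rho (A - W) = 0" unfolding rho_def rho_eq[OF AW]
      by (intro nn_integral_zero') (auto simp: indicator_def)
  qed
  define Wm where "Wm m = (\<Union>i<m. H i)" for m
  have Wms: "Wm m \<in> sets borel" for m unfolding Wm_def using Hs by auto
  have Wmfin: "emeasure lam (Wm m) < top" for m
  proof -
    have "emeasure lam (Wm m) \<le> (\<Sum>i<m. emeasure lam (H i))"
      unfolding Wm_def by (rule emeasure_subadditive_finite) (use Hs lam in auto)
    also have "\<dots> < top" using Hfin by simp
    finally show ?thesis .
  qed
  have Wminc: "incseq Wm" unfolding incseq_def Wm_def by (auto intro: order.strict_trans2)
  have WmU: "(\<Union>m. Wm m) = W" unfolding Wm_def W_def by auto
  have inside: "emeasure nu (A \<inter> W) = emeasure rho (A \<inter> W)" if A: "A \<in> sets borel" for A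
  proof -
    have eqm: "emeasure nu (A \<inter> Wm m) = emeasure rho (A \<inter> Wm m)" for m
    proof -
      have "emeasure lam (A \<inter> Wm m) \<le> emeasure lam (Wm m)"
        using A Wms lam by (intro emeasure_mono) auto
      then have "emeasure lam (A \<inter> Wm m) < top" using Wmfin[of m] by (simp add: le_less_trans)
      then show ?thesis unfolding nu_def rho_def using A Wms by (intro fin_eq) auto
    qed
    have inc: "incseq (\<lambda>m. A \<inter> Wm m)" using Wminc by (auto simp: incseq_def)
    have UU: "(\<Union>m. A \<inter> Wm m) = A \<inter> W" using WmU by auto
    have "emeasure nu (A \<inter> W) = (SUP m. emeasure nu (A \<inter> Wm m))"
      unfolding UU[symmetric] by (rule SUP_emeasure_incseq[symmetric]) (use A Wms snu inc in auto)
    also have "\<dots> = (SUP m. emeasure rho (A \<inter> Wm m))" by (simp add: eqm)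
    also have "\<dots> = emeasure rho (A \<inter> W)"
      unfolding UU[symmetric] by (rule SUP_emeasure_incseq) (use A Wms srho inc in auto)
    finally show ?thesis .
  qed
  have "nu = rho"
  proof (rule measure_eqI)
    show "sets nu = sets rho" using snu srho by simp
    fix A assume "A \<in> sets nu"
    then have A: "A \<in> sets borel" using snu by simp
    have dec: "emeasure m A = emeasure m (A \<inter> W) + emeasure m (A - W)" if "sets m = sets borel" for m
      using A Ws that by (subst plus_emeasure) (auto intro!: arg_cong[where f="emeasure m"])
    show "emeasure nu A = emeasure rho A"
      using dec[OF snu] dec[OF srho] inside[OF A] out[OF A] by simp
  qed
  then show ?thesis unfolding nu_def rho_def .
qed

end

lemma one_prior:
  fixes T :: "'x::polish_space \<Rightarrow> 'x measure"
    and lam :: "'x measure"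
    and t :: "'x \<Rightarrow> 'x \<Rightarrow> real"
    and \<mu> :: "'x measure"
    and \<pi> :: "nat \<Rightarrow> 'x measure"
  assumes lam: "sets lam = sets borel"
    and Tm: "T \<in> borel \<rightarrow>\<^sub>M prob_algebra borel"
    and tm: "\<And>x. t x \<in> borel_measurable borel"
    and tpos: "\<And>x y. t x y \<ge> 0"
    and Td: "\<And>x. T x = density lam (\<lambda>y. ennreal (t x y))"
    and ue: "unif_bdd_equicont t UNIV"
    and ps: "predictor_seq T \<mu> \<pi>"
  shows "\<exists>f :: nat \<Rightarrow> 'x \<Rightarrow> real.
           (\<forall>n\<ge>1. f n \<in> borel_measurable borel \<and> (\<forall>y. f n y \<ge> 0) \<and>
                  \<pi> n = density lam (\<lambda>y. ennreal (f n y))) \<and>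
           unif_bdd_equicont f {1..}"
proof -
  obtain B where B: "\<And>x y. \<bar>t x y\<bar> \<le> B" using ue unfolding unif_bdd_equicont_def by auto
  have Bd: "\<And>x y. t x y \<le> B" using B abs_le_D1 by blast
  have eqc: "\<And>x' e. e > 0 \<Longrightarrow> \<exists>d>0. \<forall>y. dist y x' < d \<longrightarrow> (\<forall>x. \<bar>t x y - t x x'\<bar> < e)"
    using ue unfolding unif_bdd_equicont_def by blast
  from ps have "\<forall>n. \<exists>F. F \<in> space (prob_algebra borel) \<and> \<pi> (Suc n) = F \<bind> T"
    unfolding predictor_seq_def by blast
  then obtain Fs where Fs: "\<And>n. Fs n \<in> space (prob_algebra borel)" "\<And>n. \<pi> (Suc n) = Fs n \<bind> T"
    by metis
  define f where "f n y = enn2real (\<integral>\<^sup>+x. ennreal (t x y) \<partial>Fs (n - 1))" for n y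
  note facts = ff_meas[OF lam Tm tm tpos Td Bd eqc Fs(1)] ff_nonneg[OF lam Tm tm tpos Td Bd eqc Fs(1)] ff_le[OF lam Tm tm tpos Td Bd eqc Fs(1)]
     bind_eq_density[OF lam Tm tm tpos Td Bd eqc Fs(1)] ennreal_ff[OF lam Tm tm tpos Td Bd eqc Fs(1)]
     ff_close[OF lam Tm tm tpos Td Bd eqc Fs(1)]
  have fdef: "f n = ff t (Fs (n - 1))" for n unfolding f_def by (rule ext) (simp only: ff_def[OF lam Tm tm tpos Td Bd eqc Fs(1)] gg_def[OF lam Tm tm tpos Td Bd eqc Fs(1)])
  have part1: "f n \<in> borel_measurable borel \<and> (\<forall>y. f n y \<ge> 0) \<and>
                  \<pi> n = density lam (\<lambda>y. ennreal (f n y))" if "n \<ge> 1" for n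
  proof (intro conjI allI)
    from that have n: "n = Suc (n - 1)" by simp
    show "f n \<in> borel_measurable borel" unfolding fdef by (rule facts(1))
    show "0 \<le> f n y" for y unfolding fdef using facts(2) by blast
    have "\<pi> n = Fs (n - 1) \<bind> T" using Fs(2)[of "n - 1"] n by simp
    then show "\<pi> n = density lam (\<lambda>y. ennreal (f n y))"
      unfolding fdef using facts(4) by (simp add: facts(5))
  qed
  have part2: "unif_bdd_equicont f {1..}"
    unfolding unif_bdd_equicont_def
  proof (intro conjI)
    show "\<exists>B. \<forall>i\<in>{1..}. \<forall>y. \<bar>f i y\<bar> \<le> B"
      using facts(2,3) unfolding fdef by (intro exI[of _ B]) (simp add: abs_of_nonneg)
    show "\<forall>x'. \<forall>e>0. \<exists>d>0. \<forall>y. dist y x' < d \<longrightarrow> (\<forall>i\<in>{1..}. \<bar>f i y - f i x'\<bar> < e)"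
    proof (intro allI impI)
      fix x' :: 'x and e :: real assume "0 < e"
      then obtain d where d: "d > 0" "\<And>y. dist y x' < d \<Longrightarrow> (\<forall>x. \<bar>t x y - t x x'\<bar> < e / 2)"
        using eqc[of "e/2" x'] by auto
      have "\<bar>f i y - f i x'\<bar> < e" if "dist y x' < d" for i y
      proof -
        have "\<bar>f i y - f i x'\<bar> \<le> e / 2" unfolding fdef
          using d(2) that by (intro facts(6)) (auto intro: less_imp_le)
        then show ?thesis using \<open>0 < e\<close> by linarith
      qed
      then show "\<exists>d>0. \<forall>y. dist y x' < d \<longrightarrow> (\<forall>i\<in>{1..}. \<bar>f i y - f i x'\<bar> < e)"
        using d(1) by blast
    qed
  qed
  show ?thesis using part1 part2 by blast
qed

theorem lemma4:
  fixes T :: "'x::polish_space \<Rightarrow> 'x measure"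
    and lam :: "'x measure"
    and t :: "'x \<Rightarrow> 'x \<Rightarrow> real"
    and \<mu> \<nu> :: "'x measure"
    and \<pi>\<mu> \<pi>\<nu> :: "nat \<Rightarrow> 'x measure"
  assumes "sets lam = sets borel"
    and "T \<in> borel \<rightarrow>\<^sub>M prob_algebra borel"
    and "\<And>x. t x \<in> borel_measurable borel"
    and "\<And>x y. t x y \<ge> 0"
    and "\<And>x. T x = density lam (\<lambda>y. ennreal (t x y))"
    and "unif_bdd_equicont t UNIV"
    and "\<mu> \<in> space (prob_algebra borel)"
    and "\<nu> \<in> space (prob_algebra borel)"
    and "predictor_seq T \<mu> \<pi>\<mu>"
    and "predictor_seq T \<nu> \<pi>\<nu>"
  shows "\<exists>f\<mu> f\<nu> :: nat \<Rightarrow> 'x \<Rightarrow> real.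
           (\<forall>n\<ge>1. f\<mu> n \<in> borel_measurable borel \<and> (\<forall>y. f\<mu> n y \<ge> 0) \<and>
                  \<pi>\<mu> n = density lam (\<lambda>y. ennreal (f\<mu> n y))) \<and>
           (\<forall>n\<ge>1. f\<nu> n \<in> borel_measurable borel \<and> (\<forall>y. f\<nu> n y \<ge> 0) \<and>
                  \<pi>\<nu> n = density lam (\<lambda>y. ennreal (f\<nu> n y))) \<and>
           unif_bdd_equicont f\<mu> {1..} \<and> unif_bdd_equicont f\<nu> {1..}"
proof -
  obtain f1 where f1: "(\<forall>n\<ge>1. f1 n \<in> borel_measurable borel \<and> (\<forall>y. f1 n y \<ge> 0) \<and>
                  \<pi>\<mu> n = density lam (\<lambda>y. ennreal (f1 n y))) \<and> unif_bdd_equicont f1 {1..}"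
    using one_prior[OF assms(1-6) assms(9)] by blast
  obtain f2 where f2: "(\<forall>n\<ge>1. f2 n \<in> borel_measurable borel \<and> (\<forall>y. f2 n y \<ge> 0) \<and>
                  \<pi>\<nu> n = density lam (\<lambda>y. ennreal (f2 n y))) \<and> unif_bdd_equicont f2 {1..}"
    using one_prior[OF assms(1-6) assms(10)] by blast
  show ?thesis using f1 f2 by blast
qed

end
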